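(* Let $H_0=p^2+|k|$ on $L^2(\mathbb{R}^6)$. Fix $\epsilon>0$ and an energy $E\neq0$. Then there exists $\delta>0$ such that $H_0$ satisfies a Mourre estimate at $E$ with conjugate operator $A$, width $\delta$, and constant $\alpha=E-\epsilon$ if $E>0$, and constant $\alpha=c$ if $E<0$, where $c>0$ is any positive constant.
   Context: $X=(x,y)\in\mathbb{R}^6$, $P=(p,k)$, $p=-i\nabla_x$, $k=-i\nabla_y$; $A=\frac12(P\cdot X+X\cdot P)$; $[H_0,iA]=2p^2+|k|$. A self-adjoint $T$ satisfies a Mourre estimate at $E$ with conjugate operator $A$, constant $\alpha$ and width $\delta$ if, with $\Delta=(E-\delta,E+\delta)$, $E_\Delta(T)[T,iA]E_\Delta(T)\ge\alpha E_\Delta(T)+K$ for some compact $K$ ($E_\Delta$ = spectral projection). *)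

theory Defs
  imports "HOL-Analysis.Analysis"
begin

text \<open>Momentum-space (Fourier) representation of L^2(R^6) = L^2(R^3_x x R^3_y).
  A point of momentum space is a pair (p, k) with p, k in R^3.
  Square-integrable complex functions (not quotiented by a.e. equality).\<close>

definition L2 :: "('a::euclidean_space \<Rightarrow> complex) set" where
  "L2 = {f. f \<in> borel_measurable lborel \<and> integrable lborel (\<lambda>x. (norm (f x))\<^sup>2)}"

definition l2inner :: "('a::euclidean_space \<Rightarrow> complex) \<Rightarrow> ('a \<Rightarrow> complex) \<Rightarrow> complex" where
  "l2inner f g = (LINT x|lborel. cnj (f x) * g x)"

definition l2norm :: "('a::euclidean_space \<Rightarrow> complex) \<Rightarrow> real" where
  "l2norm f = sqrt (LINT x|lborel. (norm (f x))\<^sup>2)"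

definition compact_op_L2 :: "(('a::euclidean_space \<Rightarrow> complex) \<Rightarrow> ('a \<Rightarrow> complex)) \<Rightarrow> bool" where
  "compact_op_L2 K \<longleftrightarrow>
     (\<forall>f\<in>L2. K f \<in> L2) \<and>
     (\<forall>f\<in>L2. \<forall>g\<in>L2. K (\<lambda>x. f x + g x) = (\<lambda>x. K f x + K g x)) \<and>
     (\<forall>f\<in>L2. \<forall>a::complex. K (\<lambda>x. a * f x) = (\<lambda>x. a * K f x)) \<and>
     (\<forall>u::nat \<Rightarrow> 'a \<Rightarrow> complex. (\<forall>n. u n \<in> L2) \<and> bounded (range (\<lambda>n. l2norm (u n))) \<longrightarrow>
        (\<exists>r g. strict_mono r \<and> g \<in> L2 \<and>
               (\<lambda>n. l2norm (\<lambda>x. K (u (r n)) x - g x)) \<longlonglongrightarrow> 0))"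

text \<open>Mourre estimate for a self-adjoint multiplication operator T = (multiplication by h)
  whose commutator [T, iA] is the multiplication operator by c:
  E_Delta(T) [T,iA] E_Delta(T) >= alpha E_Delta(T) + K with K compact, Delta = (E-delta,E+delta),
  where E_Delta(T) is multiplication by the indicator of h^{-1}(Delta).
  The operator inequality is expressed through quadratic forms on L^2.\<close>

definition mourre_estimate_mult ::
  "('a::euclidean_space \<Rightarrow> real) \<Rightarrow> ('a \<Rightarrow> real) \<Rightarrow> real \<Rightarrow> real \<Rightarrow> real \<Rightarrow> bool" where
  "mourre_estimate_mult h c E \<alpha> \<delta> \<longleftrightarrow>
     (\<exists>K. compact_op_L2 K \<and>
        (\<forall>f\<in>L2.
           let g = (\<lambda>x. of_real (indicator {x. h x \<in> {E - \<delta><..<E + \<delta>}} x) * f x) in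
           l2inner f (K f) \<in> \<real> \<and>
           Re (l2inner f (K f)) \<le>
             (LINT x|lborel. c x * (norm (g x))\<^sup>2) - \<alpha> * (LINT x|lborel. (norm (g x))\<^sup>2)))"

text \<open>Symbols in momentum representation: H_0 = p^2 + |k|, and [H_0, iA] = 2p^2 + |k|.\<close>

definition H0_symbol :: "((real^3) \<times> (real^3)) \<Rightarrow> real" where
  "H0_symbol = (\<lambda>(p, k). (norm p)\<^sup>2 + norm k)"

definition H0_comm_symbol :: "((real^3) \<times> (real^3)) \<Rightarrow> real" where
  "H0_comm_symbol = (\<lambda>(p, k). 2 * (norm p)\<^sup>2 + norm k)"

end

theory Submission
  imports Defs
begin

lemma h_meas: "H0_symbol \<in> borel_measurable lborel"
  unfolding measurable_lborel2 by (rule borel_measurable_continuous_onI) (auto simp: H0_symbol_def case_prod_beta intro!: continuous_intros)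

lemma c_meas: "H0_comm_symbol \<in> borel_measurable lborel"
  unfolding measurable_lborel2 by (rule borel_measurable_continuous_onI) (auto simp: H0_comm_symbol_def case_prod_beta intro!: continuous_intros)

lemma zero_compact: "compact_op_L2 (\<lambda>(f::('a::euclidean_space \<Rightarrow> complex)) x. 0)"
proof -
  have z: "(\<lambda>x::'a. 0::complex) \<in> L2" unfolding L2_def by simp
  have "l2norm (\<lambda>x::'a. (0::complex) - 0) = 0" unfolding l2norm_def by simp
  moreover have "strict_mono (id::nat\<Rightarrow>nat)" by (simp add: strict_mono_def)
  ultimately show ?thesis unfolding compact_op_L2_def using z
    by (intro conjI allI ballI impI exI[of _ id] exI[of _ "\<lambda>x. 0"]) auto
qed

lemma shell_meas:
  assumes "f \<in> L2"
  shows "(\<lambda>x. of_real (indicator {x. H0_symbol x \<in> {a<..<b}} x) * f x) \<in> borel_measurable lborel"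
proof -
  have "{x. H0_symbol x \<in> {a<..<b}} \<in> sets borel"
    using h_meas unfolding measurable_lborel2 by measurable
  moreover have "f \<in> borel_measurable borel" using assms unfolding L2_def by auto
  ultimately show ?thesis unfolding measurable_lborel2 by measurable
qed

lemma c_le_h: "H0_comm_symbol x \<le> 2 * H0_symbol x" "0 \<le> H0_comm_symbol x" "0 \<le> H0_symbol x"
  unfolding H0_comm_symbol_def H0_symbol_def by (auto simp: case_prod_beta)

lemma mourre_suff:
  assumes "\<And>x. H0_symbol x \<in> {E - \<delta><..<E + \<delta>} \<Longrightarrow> \<alpha> \<le> H0_comm_symbol x"
  shows "mourre_estimate_mult H0_symbol H0_comm_symbol E \<alpha> \<delta>"
  unfolding mourre_estimate_mult_def
proof (rule exI[of _ "\<lambda>f x. 0"], intro conjI zero_compact ballI)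
  fix f :: "(real^3) \<times> (real^3) \<Rightarrow> complex"
  assume f: "f \<in> L2"
  define S where "S = {x. H0_symbol x \<in> {E - \<delta><..<E + \<delta>}}"
  define g where "g = (\<lambda>x. of_real (indicator S x) * f x)"
  have Sm: "S \<in> sets borel" unfolding S_def using h_meas unfolding measurable_lborel2 by measurable
  have fm: "f \<in> borel_measurable borel" using f unfolding L2_def by auto
  have gm: "g \<in> borel_measurable lborel" unfolding g_def S_def using shell_meas[OF f] .
  have fi: "integrable lborel (\<lambda>x. (norm (f x))\<^sup>2)" using f unfolding L2_def by auto
  have gn: "(norm (g x))\<^sup>2 = indicator S x * (norm (f x))\<^sup>2" for x
    unfolding g_def by (auto simp: indicator_def)
  have Gi: "integrable lborel (\<lambda>x. (norm (g x))\<^sup>2)"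
    by (rule Bochner_Integration.integrable_bound[OF fi]) (use gm Sm fm in \<open>auto simp: gn indicator_def\<close>)
  have cG: "norm (H0_comm_symbol x * (norm (g x))\<^sup>2) \<le> norm (2 * \<bar>E + \<delta>\<bar> * (norm (f x))\<^sup>2)" for x
  proof (cases "x \<in> S")
    case True
    then have "H0_comm_symbol x \<le> 2 * \<bar>E + \<delta>\<bar>" using c_le_h[of x] unfolding S_def by auto
    then show ?thesis using True c_le_h[of x] by (auto simp: gn intro!: mult_right_mono)
  next
    case False then show ?thesis by (simp add: gn)
  qed
  have cGi: "integrable lborel (\<lambda>x. H0_comm_symbol x * (norm (g x))\<^sup>2)"
    by (rule Bochner_Integration.integrable_bound[OF integrable_mult_right[OF fi, where c="2 * \<bar>E + \<delta>\<bar>"]])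
       (use gm c_meas cG in \<open>auto intro!: AE_I2\<close>)
  have pw: "\<alpha> * (norm (g x))\<^sup>2 \<le> H0_comm_symbol x * (norm (g x))\<^sup>2" for x
  proof (cases "x \<in> S")
    case True
    then show ?thesis using assms[of x] unfolding S_def by (auto intro!: mult_right_mono)
  next
    case False then show ?thesis by (simp add: gn)
  qed
  have "\<alpha> * (LINT x|lborel. (norm (g x))\<^sup>2) = (LINT x|lborel. \<alpha> * (norm (g x))\<^sup>2)" by simp
  also have "\<dots> \<le> (LINT x|lborel. H0_comm_symbol x * (norm (g x))\<^sup>2)"
    by (rule integral_mono[OF integrable_mult_right[OF Gi] cGi pw])
  finally have "0 \<le> (LINT x|lborel. H0_comm_symbol x * (norm (g x))\<^sup>2) - \<alpha> * (LINT x|lborel. (norm (g x))\<^sup>2)"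
    by simp
  moreover have "l2inner f ((\<lambda>f x. 0) f) = 0" unfolding l2inner_def by simp
  ultimately show "let g = \<lambda>x. complex_of_real (indicator {x. H0_symbol x \<in> {E - \<delta><..<E + \<delta>}} x) * f x
         in l2inner f ((\<lambda>f x. 0) f) \<in> \<real> \<and>
            Re (l2inner f ((\<lambda>f x. 0) f))
            \<le> (LINT x|lborel. H0_comm_symbol x * (cmod (g x))\<^sup>2) - \<alpha> * (LINT x|lborel. (cmod (g x))\<^sup>2)"
    unfolding Let_def g_def S_def by simp
qed

theorem lemma3p1:
  fixes \<epsilon> E :: real
  assumes "\<epsilon> > 0" and "E \<noteq> 0"
  shows "\<exists>\<delta>>0.
           (E > 0 \<longrightarrow> mourre_estimate_mult H0_symbol H0_comm_symbol E (E - \<epsilon>) \<delta>) \<and>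
           (E < 0 \<longrightarrow> (\<forall>c>0. mourre_estimate_mult H0_symbol H0_comm_symbol E c \<delta>))"
proof (intro exI[of _ "min \<epsilon> (\<bar>E\<bar>/2)"] conjI impI allI)
  show "0 < min \<epsilon> (\<bar>E\<bar>/2)" using assms by auto
next
  assume "E > 0"
  show "mourre_estimate_mult H0_symbol H0_comm_symbol E (E - \<epsilon>) (min \<epsilon> (\<bar>E\<bar>/2))"
  proof (rule mourre_suff)
    fix x assume "H0_symbol x \<in> {E - min \<epsilon> (\<bar>E\<bar>/2)<..<E + min \<epsilon> (\<bar>E\<bar>/2)}"
    then have "E - \<epsilon> < H0_symbol x" by auto
    moreover have "H0_symbol x \<le> H0_comm_symbol x"
      unfolding H0_comm_symbol_def H0_symbol_def by (simp add: case_prod_beta)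
    ultimately show "E - \<epsilon> \<le> H0_comm_symbol x" by linarith
  qed
next
  fix c :: real assume "E < 0"
  show "mourre_estimate_mult H0_symbol H0_comm_symbol E c (min \<epsilon> (\<bar>E\<bar>/2))"
  proof (rule mourre_suff)
    fix x assume "H0_symbol x \<in> {E - min \<epsilon> (\<bar>E\<bar>/2)<..<E + min \<epsilon> (\<bar>E\<bar>/2)}"
    then have False using c_le_h(3)[of x] \<open>E < 0\<close> by auto
    then show "c \<le> H0_comm_symbol x" ..
  qed
qed

end
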